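(* Let $K\subset\mathbb{R}^m$ be a pointed, closed, convex cone with nonempty interior, let $C\subset\mathbb{R}^m$ be a compact set with $0\notin C$ and $K^*=\operatorname{cone}(\operatorname{conv}(C))$, and let $F:\mathbb{R}^n\to\mathbb{R}^m$ be continuously differentiable with Jacobian $JF$. Define $h(x,d)=\sup\{\langle JF(x)d,w\rangle : w\in C\}$ and $v(x)=\arg\min_{d\in\mathbb{R}^n}\{h(x,d)+\tfrac12\|d\|^2\}$. Fix $\mu>2$. Let $\{x^k\}$ and $\{d^k\}$ be generated by the following scheme with arbitrary positive stepsizes $\alpha_k$: $x^0\in\mathbb{R}^n$ arbitrary; at iteration $k$, if $v(x^k)=0$ stop; otherwise set $d^0=v(x^0)$ and, for $k\ge1$, $d^k=v(x^k)+\beta_k d^{k-1}$, where $$\beta_k=\frac{-h(x^k,v(x^k))\big(|h(x^{k-1},v(x^k))|+h(x^{k-1},v(x^k))\big)}{\max\big\{\mu\,|h(x^k,d^{k-1})\,h(x^{k-1},v(x^k))|,\ -\mu\, h(x^{k-1},v(x^{k-1}))\,|h(x^{k-1},v(x^k))|\big\}},$$ and then $x^{k+1}=x^k+\alpha_k d^k$. Then for every $k\ge0$, $$h(x^k,d^k)\le\Big(1-\frac{2}{\mu}\Big)h(x^k,v(x^k)),$$ i.e. $d^k$ satisfies the sufficient descent condition $h(x^k,d^k)\le c\,h(x^k,v(x^k))$ with $c=1-\frac{2}{\mu}$.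
   Context: $K^*=\{w\in\mathbb{R}^m:\langle y,w\rangle\ge0\ \forall y\in K\}$ is the positive polar cone of $K$. The map $h$ is well defined since $C$ is compact, and $v(x)$ is the unique minimizer of the strongly convex function $d\mapsto h(x,d)+\frac12\|d\|^2$. A vector $d$ is a $K$-descent direction at $x$ iff $h(x,d)<0$, and $v(x)=0$ iff $x$ is a $K$-Pareto critical point, i.e. $\operatorname{Im}(JF(x))\cap(-\operatorname{int}K)=\emptyset$. *)

theory Defs
  imports "HOL-Analysis.Analysis"
begin

definition pos_polar :: "('a::real_inner) set \<Rightarrow> 'a set" where
  "pos_polar K = {w. \<forall>y\<in>K. inner y w \<ge> 0}"

definition pointed :: "('a::real_vector) set \<Rightarrow> bool" where
  "pointed K \<longleftrightarrow> (\<forall>y. y \<in> K \<and> - y \<in> K \<longrightarrow> y = 0)"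

definition hfun :: "(real^'n \<Rightarrow> real^'n^'m) \<Rightarrow> (real^'m) set \<Rightarrow> real^'n \<Rightarrow> real^'n \<Rightarrow> real" where
  "hfun JF C x d = Sup ((\<lambda>w. inner (JF x *v d) w) ` C)"

definition vfun :: "(real^'n \<Rightarrow> real^'n^'m) \<Rightarrow> (real^'m) set \<Rightarrow> real^'n \<Rightarrow> real^'n" where
  "vfun JF C x = (THE d. \<forall>d'. hfun JF C x d + (1/2) * (norm d)^2 \<le> hfun JF C x d' + (1/2) * (norm d')^2)"

text \<open>The parameter beta_k, computed from x^{k-1} (xp), x^k (xk), d^{k-1} (dp).\<close>
definition beta_k :: "(real^'n \<Rightarrow> real^'n^'m) \<Rightarrow> (real^'m) set \<Rightarrow> real \<Rightarrow> real^'n \<Rightarrow> real^'n \<Rightarrow> real^'n \<Rightarrow> real" where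
  "beta_k JF C \<mu> xp xk dp =
     (- hfun JF C xk (vfun JF C xk) * (\<bar>hfun JF C xp (vfun JF C xk)\<bar> + hfun JF C xp (vfun JF C xk)))
     / max (\<mu> * \<bar>hfun JF C xk dp * hfun JF C xp (vfun JF C xk)\<bar>)
           (- \<mu> * hfun JF C xp (vfun JF C xp) * \<bar>hfun JF C xp (vfun JF C xk)\<bar>)"

end

theory Submission
  imports Defs
begin

lemma min_exists_unique:
  fixes h :: "'a::euclidean_space \<Rightarrow> real"
  assumes sub: "\<And>u w. h (u+w) \<le> h u + h w"
    and hom: "\<And>t u. t \<ge> 0 \<Longrightarrow> h (t *\<^sub>R u) \<le> t * h u"
    and h0: "h 0 = 0" and L: "L \<ge> 0" "\<And>d. \<bar>h d\<bar> \<le> L * norm d"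
  shows "\<exists>!d. \<forall>d'. h d + 1/2 * (norm d)^2 \<le> h d' + 1/2*(norm d')^2"
proof -
  define \<phi> where "\<phi> = (\<lambda>d. h d + 1/2 * (norm d)^2)"
  have lip: "\<bar>h u - h w\<bar> \<le> L * norm (u - w)" for u w
  proof -
    have "h u \<le> h w + h (u - w)" using sub[of w "u - w"] by simp
    moreover have "h w \<le> h u + h (w - u)" using sub[of u "w - u"] by simp
    moreover have "norm (w - u) = norm (u - w)" by (rule norm_minus_commute)
    ultimately show ?thesis using L(2)[of "u - w"] L(2)[of "w - u"] by auto
  qed
  have "L-lipschitz_on UNIV h"
    unfolding lipschitz_on_def using L(1) lip by (auto simp: dist_real_def dist_norm)
  hence ch: "continuous_on UNIV h" by (rule lipschitz_on_continuous_on)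
  have cphi: "continuous_on (cball 0 (2*L)) \<phi>" unfolding \<phi>_def
    by (intro continuous_intros continuous_on_subset[OF ch]) auto
  obtain d0 where d0: "d0 \<in> cball 0 (2*L)" "\<And>y. y \<in> cball 0 (2*L) \<Longrightarrow> \<phi> d0 \<le> \<phi> y"
    using continuous_attains_inf[OF compact_cball _ cphi] L(1) by fastforce
  have phi0: "\<phi> 0 = 0" using h0 by (simp add: \<phi>_def)
  have ex: "\<phi> d0 \<le> \<phi> y" for y
  proof (cases "y \<in> cball 0 (2*L)")
    case True then show ?thesis using d0 by auto
  next
    case False
    hence ny: "norm y > 2*L" by simp
    have "-(L * norm y) \<le> h y" using L(2)[of y] by linarith
    moreover have "norm y * (1/2 * norm y - L) \<ge> 0" using ny L(1) by (intro mult_nonneg_nonneg) auto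
    ultimately have "\<phi> y \<ge> 0" unfolding \<phi>_def by (simp add: power2_eq_square algebra_simps)
    moreover have "\<phi> d0 \<le> \<phi> 0" using d0(2)[of 0] L(1) by simp
    ultimately show ?thesis using phi0 by simp
  qed
  have uniq: "d1 = d2" if m1: "\<forall>d'. \<phi> d1 \<le> \<phi> d'" and m2: "\<forall>d'. \<phi> d2 \<le> \<phi> d'" for d1 d2
  proof -
    define m where "m = (1/2) *\<^sub>R (d1 + d2)"
    have e: "\<phi> d1 = \<phi> d2" using m1 m2 by (meson order_antisym)
    have "h m \<le> 1/2 * h (d1 + d2)" unfolding m_def by (rule hom) simp
    also have "\<dots> \<le> 1/2 * (h d1 + h d2)" using sub[of d1 d2] by simp
    finally have hm: "h m \<le> 1/2 * (h d1 + h d2)" .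
    have nm: "(norm m)^2 = 1/2 * (norm d1)^2 + 1/2 * (norm d2)^2 - 1/4 * (norm (d1 - d2))^2"
      unfolding m_def power2_norm_eq_inner by (simp add: inner_add inner_diff inner_commute algebra_simps)
    have "\<phi> d1 \<le> \<phi> m" using m1 by simp
    hence "(norm (d1 - d2))^2 \<le> 0" using hm nm e unfolding \<phi>_def by argo
    thus ?thesis by simp
  qed
  show ?thesis using ex uniq unfolding \<phi>_def by blast
qed

lemma hprops:
  fixes A :: "real^'n^'m" and C :: "(real^'m) set"
  assumes "compact C" "C \<noteq> {}"
  defines "h \<equiv> \<lambda>d. Sup ((\<lambda>w. inner (A *v d) w) ` C)"
  shows "\<And>u w. h (u+w) \<le> h u + h w" "\<And>t u. t \<ge> 0 \<Longrightarrow> h (t *\<^sub>R u) \<le> t * h u"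
    "h 0 = 0" "\<exists>L\<ge>0. \<forall>d. \<bar>h d\<bar> \<le> L * norm d"
proof -
  obtain B where B: "\<And>w. w \<in> C \<Longrightarrow> norm w \<le> B"
    using compact_imp_bounded[OF assms(1)] bounded_iff by blast
  obtain M where M: "M > 0" "\<And>d. norm (A *v d) \<le> M * norm d"
    using linear_bounded_pos[OF matrix_vector_mul_linear[of A]] by blast
  have B0: "B \<ge> 0" using B assms(2) norm_ge_zero order_trans by blast
  have bnd: "\<bar>inner (A *v d) w\<bar> \<le> (M*B) * norm d" if "w \<in> C" for d w
  proof -
    have "\<bar>inner (A *v d) w\<bar> \<le> norm (A *v d) * norm w" by (rule Cauchy_Schwarz_ineq2)
    also have "\<dots> \<le> (M * norm d) * B" using M(2)[of d] B[OF that] M(1) by (intro mult_mono) auto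
    finally show ?thesis by (simp add: algebra_simps)
  qed
  have bdd: "bdd_above ((\<lambda>w. inner (A *v d) w) ` C)" for d
    using bnd by (intro bdd_aboveI[of _ "(M*B) * norm d"]) (auto simp: abs_le_iff)
  have up: "inner (A *v d) w \<le> h d" if "w \<in> C" for d w
    unfolding h_def using bdd that by (intro cSup_upper) auto
  show "h (u+w) \<le> h u + h w" for u w
  proof -
    have "inner (A *v (u+w)) z \<le> h u + h w" if "z \<in> C" for z
      using up[OF that, of u] up[OF that, of w] by (simp add: matrix_vector_right_distrib inner_add_left)
    then have "Sup ((\<lambda>z. inner (A *v (u+w)) z) ` C) \<le> h u + h w" using assms(2) by (intro cSup_least) auto
    moreover have "h (u+w) = Sup ((\<lambda>z. inner (A *v (u+w)) z) ` C)" by (simp add: h_def)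
    ultimately show ?thesis by simp
  qed
  show "h (t *\<^sub>R u) \<le> t * h u" if "t \<ge> 0" for t u
    unfolding h_def using assms(2) up[of _ u] that
    by (intro cSup_least) (auto simp: matrix_vector_mult_scaleR h_def intro: mult_left_mono)
  show "h 0 = 0" unfolding h_def using assms(2) by simp
  show "\<exists>L\<ge>0. \<forall>d. \<bar>h d\<bar> \<le> L * norm d"
  proof (intro exI[of _ "M*B"] conjI allI)
    show "M*B \<ge> 0" using M B0 by simp
    fix d
    obtain w where w: "w \<in> C" using assms(2) by blast
    have "h d \<le> (M*B) * norm d" unfolding h_def using assms(2) bnd
      by (intro cSup_least) (auto simp: abs_le_iff)
    moreover have "- ((M*B) * norm d) \<le> h d" using up[OF w, of d] bnd[OF w, of d] by linarith
    ultimately show "\<bar>h d\<bar> \<le> (M*B) * norm d" by linarith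
  qed
qed

lemma beta_arith:
  fixes hk a b c \<mu> :: real
  assumes hk: "hk \<le> 0" and mu: "\<mu> > 2"
  defines "\<beta> \<equiv> (- hk * (\<bar>a\<bar> + a)) / max (\<mu> * \<bar>b * a\<bar>) (- \<mu> * c * \<bar>a\<bar>)"
  shows "\<beta> \<ge> 0" "\<beta> * b \<le> - (2/\<mu>) * hk"
proof -
  define D where "D = max (\<mu> * \<bar>b * a\<bar>) (- \<mu> * c * \<bar>a\<bar>)"
  have D1: "D \<ge> \<mu> * (\<bar>b\<bar> * \<bar>a\<bar>)" unfolding D_def by (simp add: abs_mult)
  have D0: "D \<ge> 0" using D1 mu by (smt (verit) mult_nonneg_nonneg abs_ge_zero)
  have N0: "- hk * (\<bar>a\<bar> + a) \<ge> 0" using hk by (intro mult_nonneg_nonneg) auto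
  show b0: "\<beta> \<ge> 0" unfolding \<beta>_def D_def[symmetric] using D0 N0 by (simp add: divide_nonpos_nonneg)
  show "\<beta> * b \<le> - (2/\<mu>) * hk"
  proof (cases "a > 0 \<and> b \<noteq> 0")
    case False
    have m: "2 * hk / \<mu> \<le> 0" using hk mu by (simp add: divide_nonpos_pos)
    show ?thesis
    proof (cases "a > 0")
      case False then have "\<bar>a\<bar> + a = 0" by simp
      then show ?thesis unfolding \<beta>_def using m by simp
    next
      case True then have "b = 0" using \<open>\<not> (a > 0 \<and> b \<noteq> 0)\<close> by simp
      then show ?thesis using m by simp
    qed
  next
    case True
    then have Dp: "D > 0" using D1 mu by (smt (verit) mult_pos_pos zero_less_abs_iff)
    have "\<beta> * b \<le> \<beta> * \<bar>b\<bar>" using b0 by (simp add: mult_left_mono)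
    also have "\<beta> * \<bar>b\<bar> = (- hk * (2*a) * \<bar>b\<bar>) / D" unfolding \<beta>_def D_def[symmetric] using True by simp
    also have "\<dots> \<le> - (2/\<mu>) * hk"
    proof -
      have "- hk * (2*a) * \<bar>b\<bar> = (- (2/\<mu>) * hk) * (\<mu> * (\<bar>b\<bar> * \<bar>a\<bar>))" using mu True by (simp add: field_simps)
      also have "\<dots> \<le> (- (2/\<mu>) * hk) * D" using D1 hk mu by (intro mult_left_mono) (auto simp: divide_nonpos_pos)
      finally show ?thesis by (simp only: pos_divide_le_eq[OF Dp])
    qed
    finally show ?thesis .
  qed
qed
theorem mainTheorem1:
  fixes K C :: "(real^'m) set"
    and F :: "real^'n \<Rightarrow> real^'m"
    and JF :: "real^'n \<Rightarrow> real^'n^'m"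
    and \<mu> :: real
    and x d :: "nat \<Rightarrow> real^'n"
    and \<alpha> :: "nat \<Rightarrow> real"
  assumes K_cone: "cone K" and K_convex: "convex K" and K_closed: "closed K"
    and K_pointed: "pointed K" and K_int: "interior K \<noteq> {}"
    and C_compact: "compact C" and C_zero: "0 \<notin> C"
    and K_dual: "pos_polar K = cone hull (convex hull C)"
    and F_deriv: "\<And>y. (F has_derivative (\<lambda>u. JF y *v u)) (at y)"
    and JF_cont: "continuous_on UNIV JF"
    and mu: "\<mu> > 2"
    and alpha_pos: "\<And>k. \<alpha> k > 0"
    and d0: "d 0 = vfun JF C (x 0)"
    and dk: "\<And>k. k \<ge> 1 \<Longrightarrow> (\<forall>j\<le>k. vfun JF C (x j) \<noteq> 0) \<Longrightarrow>
              d k = vfun JF C (x k) + beta_k JF C \<mu> (x (k - 1)) (x k) (d (k - 1)) *\<^sub>R d (k - 1)"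
    and xk: "\<And>k. (\<forall>j\<le>k. vfun JF C (x j) \<noteq> 0) \<Longrightarrow> x (Suc k) = x k + \<alpha> k *\<^sub>R d k"
  shows "\<forall>k. (\<forall>j\<le>k. vfun JF C (x j) \<noteq> 0) \<longrightarrow>
           hfun JF C (x k) (d k) \<le> (1 - 2 / \<mu>) * hfun JF C (x k) (vfun JF C (x k))"
  proof (intro allI impI)
  fix k
  assume nz: "\<forall>j\<le>k. vfun JF C (x j) \<noteq> 0"
  have "0 \<in> pos_polar K" unfolding pos_polar_def by simp
  hence Cne: "C \<noteq> {}" using K_dual by (auto simp: cone_hull_empty)
  define h where "h = hfun JF C"
  define v where "v = vfun JF C"
  have hp: "h y (u+w) \<le> h y u + h y w" "t \<ge> 0 \<Longrightarrow> h y (t *\<^sub>R u) \<le> t * h y u"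
     "h y 0 = 0" "\<exists>L\<ge>0. \<forall>d. \<bar>h y d\<bar> \<le> L * norm d" for y u w t
  proof -
    have e: "h y = (\<lambda>d. Sup ((\<lambda>w. inner (JF y *v d) w) ` C))" unfolding h_def hfun_def by (rule refl)
    note H = hprops[OF C_compact Cne, where A="JF y"]
    show "h y (u+w) \<le> h y u + h y w" unfolding e by (rule H(1))
    show "t \<ge> 0 \<Longrightarrow> h y (t *\<^sub>R u) \<le> t * h y u" unfolding e by (rule H(2))
    show "h y 0 = 0" unfolding e by (rule H(3))
    show "\<exists>L\<ge>0. \<forall>d. \<bar>h y d\<bar> \<le> L * norm d" unfolding e by (rule H(4))
  qed
  have hv: "h y (v y) \<le> 0" for y
  proof -
    obtain L where L: "L \<ge> 0" "\<forall>d. \<bar>h y d\<bar> \<le> L * norm d" using hp(4) by blast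
    have eu: "\<exists>!d. \<forall>d'. h y d + 1/2 * (norm d)^2 \<le> h y d' + 1/2*(norm d')^2"
      by (rule min_exists_unique[of "h y" L]) (use hp L in auto)
    have "\<forall>d'. h y (v y) + 1/2 * (norm (v y))^2 \<le> h y d' + 1/2*(norm d')^2"
      unfolding v_def vfun_def h_def[symmetric] by (rule theI'[OF eu])
    from spec[OF this, of 0] have "h y (v y) + 1/2 * (norm (v y))^2 \<le> 0" using hp(3)[of y] by simp
    moreover have "0 \<le> (norm (v y))^2" by simp
    ultimately show ?thesis by linarith
  qed
  have m2: "2 / \<mu> * h (x k) (v (x k)) \<le> 0" using hv[of "x k"] mu
    by (intro mult_nonneg_nonpos) auto
  show "hfun JF C (x k) (d k) \<le> (1 - 2 / \<mu>) * hfun JF C (x k) (vfun JF C (x k))"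
  proof (cases k)
    case 0
    then show ?thesis using d0 m2 unfolding h_def v_def by (simp add: algebra_simps)
  next
    case (Suc j)
    define \<beta> where "\<beta> = beta_k JF C \<mu> (x j) (x k) (d j)"
    have "k \<ge> 1" using Suc by simp
    from dk[OF this nz] have dkk: "d k = v (x k) + \<beta> *\<^sub>R d j" unfolding v_def \<beta>_def Suc by simp
    have ba: "\<beta> \<ge> 0" "\<beta> * h (x k) (d j) \<le> - (2/\<mu>) * h (x k) (v (x k))"
      using beta_arith[OF hv[of "x k"] mu, of "h (x j) (v (x k))" "h (x k) (d j)" "h (x j) (v (x j))"]
      unfolding \<beta>_def beta_k_def h_def v_def by simp_all
    have "h (x k) (d k) \<le> h (x k) (v (x k)) + h (x k) (\<beta> *\<^sub>R d j)" unfolding dkk by (rule hp(1))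
    also have "\<dots> \<le> h (x k) (v (x k)) + \<beta> * h (x k) (d j)" using hp(2)[OF ba(1)] by simp
    also have "\<dots> \<le> (1 - 2 / \<mu>) * h (x k) (v (x k))" using ba(2) by (simp add: algebra_simps)
    finally show ?thesis unfolding h_def v_def .
  qed
qed

end
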